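(* Let $\alpha\in(0,1]$. Let $G$ be an $r$-regular graph on $n$ vertices that is determined by its $A_\alpha$-spectrum, let $m\ge1$, and let $H$ be a graph that is $A_\alpha$-cospectral with $G\vee K_m$. If $H$ has (at least) $m$ vertices of degree $n+m-1$, then $H\cong G\vee K_m$.
   Context: All graphs are finite, simple and undirected. For a graph $G$, $A(G)$ is its adjacency matrix, $D(G)$ its diagonal degree matrix, and $A_\alpha(G)=\alpha D(G)+(1-\alpha)A(G)$. Two graphs are $A_\alpha$-cospectral if $A_\alpha$ of each has the same multiset of eigenvalues; a graph is determined by its $A_\alpha$-spectrum if every graph $A_\alpha$-cospectral with it is isomorphic to it. $K_m$ is the complete graph on $m$ vertices and $G\vee H$ is the join (disjoint union plus all edges between the two vertex sets). *)

theory Defs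
  imports "Jordan_Normal_Form.Char_Poly"
begin

definition is_graph :: "nat \<Rightarrow> (nat \<Rightarrow> nat \<Rightarrow> bool) \<Rightarrow> bool" where
  "is_graph n E \<longleftrightarrow> (\<forall>i j. E i j \<longrightarrow> i < n \<and> j < n) \<and> (\<forall>i j. E i j \<longrightarrow> E j i) \<and> (\<forall>i. \<not> E i i)"

definition degree :: "nat \<Rightarrow> (nat \<Rightarrow> nat \<Rightarrow> bool) \<Rightarrow> nat \<Rightarrow> nat" where
  "degree n E i = card {j. j < n \<and> E i j}"

definition regular :: "nat \<Rightarrow> (nat \<Rightarrow> nat \<Rightarrow> bool) \<Rightarrow> nat \<Rightarrow> bool" where
  "regular n E r \<longleftrightarrow> (\<forall>i<n. degree n E i = r)"

definition adj_mat :: "nat \<Rightarrow> (nat \<Rightarrow> nat \<Rightarrow> bool) \<Rightarrow> real mat" where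
  "adj_mat n E = mat n n (\<lambda>(i,j). if E i j then 1 else 0)"

definition deg_mat :: "nat \<Rightarrow> (nat \<Rightarrow> nat \<Rightarrow> bool) \<Rightarrow> real mat" where
  "deg_mat n E = mat n n (\<lambda>(i,j). if i = j then real (degree n E i) else 0)"

definition A_alpha :: "real \<Rightarrow> nat \<Rightarrow> (nat \<Rightarrow> nat \<Rightarrow> bool) \<Rightarrow> real mat" where
  "A_alpha \<alpha> n E = \<alpha> \<cdot>\<^sub>m deg_mat n E + (1 - \<alpha>) \<cdot>\<^sub>m adj_mat n E"

text \<open>Multiset of eigenvalues of a square real matrix: each eigenvalue counted
with its algebraic multiplicity (its multiplicity as a root of the characteristic
polynomial). For real symmetric matrices all eigenvalues are real.\<close>
definition eig_mult :: "real mat \<Rightarrow> real \<Rightarrow> nat" where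
  "eig_mult A x = order x (char_poly A)"

definition A_alpha_cospectral ::
  "real \<Rightarrow> nat \<Rightarrow> (nat \<Rightarrow> nat \<Rightarrow> bool) \<Rightarrow> nat \<Rightarrow> (nat \<Rightarrow> nat \<Rightarrow> bool) \<Rightarrow> bool" where
  "A_alpha_cospectral \<alpha> n E n' E' \<longleftrightarrow> n = n' \<and>
     (\<forall>x. eig_mult (A_alpha \<alpha> n E) x = eig_mult (A_alpha \<alpha> n' E') x)"

definition graph_iso ::
  "nat \<Rightarrow> (nat \<Rightarrow> nat \<Rightarrow> bool) \<Rightarrow> nat \<Rightarrow> (nat \<Rightarrow> nat \<Rightarrow> bool) \<Rightarrow> bool" where
  "graph_iso n E n' E' \<longleftrightarrow> (\<exists>f. bij_betw f {..<n} {..<n'} \<and>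
     (\<forall>i<n. \<forall>j<n. E i j \<longleftrightarrow> E' (f i) (f j)))"

definition DAS :: "real \<Rightarrow> nat \<Rightarrow> (nat \<Rightarrow> nat \<Rightarrow> bool) \<Rightarrow> bool" where
  "DAS \<alpha> n E \<longleftrightarrow> (\<forall>n' E'. is_graph n' E' \<and> A_alpha_cospectral \<alpha> n' E' n E \<longrightarrow> graph_iso n' E' n E)"

text \<open>Join G \<or> K_m: vertices 0..<n carry G, vertices n..<n+m carry K_m,
all edges between the two parts.\<close>
definition join_complete :: "nat \<Rightarrow> (nat \<Rightarrow> nat \<Rightarrow> bool) \<Rightarrow> nat \<Rightarrow> nat \<Rightarrow> nat \<Rightarrow> bool" where
  "join_complete n E m i j \<longleftrightarrow> i < n + m \<and> j < n + m \<and> i \<noteq> j \<and>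
     (if i < n \<and> j < n then E i j else True)"

end

theory Submission
  imports Defs "Jordan_Normal_Form.Schur_Decomposition"
begin


lemma cnj_mult_self: "cnj z * z = complex_of_real ((cmod z)^2)"
  using complex_norm_square[of z] by (simp add: mult.commute)

lemma sym_eigen_real:
  fixes A :: "real mat"
  assumes A: "A \<in> carrier_mat n n" and sym: "\<And>i j. i < n \<Longrightarrow> j < n \<Longrightarrow> A$$(i,j) = A$$(j,i)"
    and ev: "eigenvalue (map_mat complex_of_real A) c"
  shows "c = complex_of_real (Re c)"
proof -
  let ?A = "map_mat complex_of_real A"
  from ev obtain v where v: "eigenvector ?A v c" unfolding eigenvalue_def by blast
  have Ac: "?A \<in> carrier_mat n n" using A by simp
  from v[unfolded eigenvector_def] Ac
  have vc: "v \<in> carrier_vec n" and v0: "v \<noteq> 0\<^sub>v n" and Av: "?A *\<^sub>v v = c \<cdot>\<^sub>v v" by auto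
  define w where "w = (\<Sum>i<n. cnj (v$i) * v$i)"
  define S where "S = (\<Sum>i<n. cnj (v$i) * (?A *\<^sub>v v)$i)"
  have S1: "S = c * w" unfolding S_def w_def Av using vc
    by (simp add: sum_distrib_left algebra_simps)
  have S2: "S = (\<Sum>i<n. \<Sum>j<n. complex_of_real (A$$(i,j)) * cnj (v$i) * v$j)"
    unfolding S_def using A vc
    by (simp add: mult_mat_vec_def scalar_prod_def sum_distrib_left algebra_simps lessThan_atLeast0)
  have "cnj S = (\<Sum>i<n. \<Sum>j<n. complex_of_real (A$$(i,j)) * v$i * cnj (v$j))"
    unfolding S2 by (simp add: cnj_sum)
  also have "\<dots> = (\<Sum>j<n. \<Sum>i<n. complex_of_real (A$$(i,j)) * v$i * cnj (v$j))"
    by (rule sum.swap)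
  also have "\<dots> = S" unfolding S2
    by (intro sum.cong refl, simp add: sym algebra_simps)
  finally have cS: "cnj S = S" .
  have wr: "w = complex_of_real (\<Sum>i<n. (cmod (v$i))^2)"
    unfolding w_def of_real_sum by (intro sum.cong refl, rule cnj_mult_self)
  from v0 vc obtain i where i: "i < n" "v$i \<noteq> 0" by (metis eq_vecI carrier_vecD index_zero_vec(1,2))
  have "(\<Sum>i<n. (cmod (v$i))^2) > 0"
  proof -
    have "(\<Sum>i<n. (cmod (v$i))^2) \<ge> (cmod (v$i))^2"
      by (rule member_le_sum, insert i, auto)
    moreover have "(cmod (v$i))^2 > 0" using i by simp
    ultimately show ?thesis by linarith
  qed
  hence w0: "w \<noteq> 0" unfolding wr by (metis of_real_eq_0_iff less_irrefl)
  have "cnj c * w = c * w" using cS unfolding S1 wr by simp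
  hence "cnj c = c" using w0 by simp
  thus ?thesis by (metis Reals_cnj_iff of_real_Re)
qed

lemma sym_split:
  fixes A :: "real mat"
  assumes A: "A \<in> carrier_mat n n" and sym: "\<And>i j. i < n \<Longrightarrow> j < n \<Longrightarrow> A$$(i,j) = A$$(j,i)"
  shows "\<exists>es. char_poly A = (\<Prod>e\<leftarrow>es. [:-e,1:])"
proof -
  let ?A = "map_mat complex_of_real A"
  interpret mp: map_poly_comm_ring_hom "complex_of_real" ..
  interpret mpi: map_poly_inj_comm_ring_hom "complex_of_real" ..
  have Ac: "?A \<in> carrier_mat n n" using A by simp
  from char_poly_factorized[OF Ac] obtain as where
    cp: "char_poly ?A = (\<Prod>a\<leftarrow>as. [:-a,1:])" by blast
  have h: "char_poly ?A = map_poly complex_of_real (char_poly A)"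
    by (rule of_real_hom.char_poly_hom[OF A])
  have re: "a = complex_of_real (Re a)" if "a \<in> set as" for a
  proof (rule sym_eigen_real[OF A sym])
    have "poly (char_poly ?A) a = 0" unfolding cp using that
      by (simp add: poly_prod_list prod_list_zero_iff)
    thus "eigenvalue ?A a" using eigenvalue_root_char_poly[OF Ac] by simp
  qed auto
  have "map_poly complex_of_real (\<Prod>e\<leftarrow>map Re as. [:-e,1:]) = (\<Prod>a\<leftarrow>as. [:-a,1:])"
    using re
  proof (induction as)
    case Nil then show ?case by simp
  next
    case (Cons a as)
    have "map_poly complex_of_real [:-Re a, 1:] = [:-a,1:]"
      using Cons.prems[of a] by (simp add: of_real_hom.hom_uminus)
    moreover have "map_poly complex_of_real (\<Prod>e\<leftarrow>map Re (a#as). [:-e,1:])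
       = map_poly complex_of_real [:-Re a, 1:] * map_poly complex_of_real (\<Prod>e\<leftarrow>map Re as. [:-e,1:])"
      by (simp only: list.map prod_list.Cons mp.hom_mult)
    ultimately show ?case using Cons by simp
  qed
  hence "map_poly complex_of_real (char_poly A) = map_poly complex_of_real (\<Prod>e\<leftarrow>map Re as. [:-e,1:])"
    using h cp by simp
  hence "char_poly A = (\<Prod>e\<leftarrow>map Re as. [:-e,1:])"
    by (rule mpi.injectivity)
  thus ?thesis by blast
qed



lemma order_lin_prod:
  "Polynomial.order x (\<Prod>e\<leftarrow>es. [:-e,1::real:]) = count (mset es) x"
proof (induction es)
  case Nil
  then show ?case by (simp add: order_0I)
next
  case (Cons a es)
  have nz: "(\<Prod>e\<leftarrow>es. [:-e,1::real:]) \<noteq> 0"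
    by (auto simp: prod_list_zero_iff)
  have "Polynomial.order x ([:-a,1::real:] * (\<Prod>e\<leftarrow>es. [:-e,1::real:])) =
        Polynomial.order x [:-a,1:] + Polynomial.order x (\<Prod>e\<leftarrow>es. [:-e,1::real:])"
    by (rule order_mult) (metis nz mult_eq_0_iff pCons_eq_0_iff one_neq_zero)
  moreover have "Polynomial.order x [:-a,1::real:] = (if x = a then 1 else 0)"
    using order_power_n_n[of a 1] by (auto intro!: order_0I)
  ultimately show ?case using Cons by simp
qed

definition tr :: "real mat \<Rightarrow> real" where
  "tr A = (\<Sum>i<dim_row A. A$$(i,i))"

lemma tr_comm:
  assumes X: "X \<in> carrier_mat n n" and Y: "Y \<in> carrier_mat n n"
  shows "tr (X*Y) = tr (Y*X)"
proof -
  have "tr (X*Y) = (\<Sum>i<n. \<Sum>k<n. X$$(i,k) * Y$$(k,i))"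
    using X Y by (simp add: tr_def scalar_prod_def lessThan_atLeast0)
  also have "\<dots> = (\<Sum>k<n. \<Sum>i<n. Y$$(k,i) * X$$(i,k))"
    by (subst sum.swap) (simp add: mult.commute)
  also have "\<dots> = tr (Y*X)"
    using X Y by (simp add: tr_def scalar_prod_def lessThan_atLeast0)
  finally show ?thesis .
qed

lemma split_traces:
  fixes A :: "real mat"
  assumes A: "A \<in> carrier_mat n n" and cp: "char_poly A = (\<Prod>e\<leftarrow>es. [:-e,1:])"
  shows "tr A = sum_list es" "tr (A*A) = sum_list (map (\<lambda>e. e^2) es)"
proof -
  obtain B P Q where sd: "schur_decomposition A es = (B,P,Q)" by (cases "schur_decomposition A es", auto)
  from schur_decomposition[OF A cp sd] have
    sw: "similar_mat_wit A B P Q" and ut: "upper_triangular B" and dg: "diag_mat B = es" by auto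
  from similar_mat_witD2[OF A sw] have B: "B \<in> carrier_mat n n" and P: "P \<in> carrier_mat n n"
    and Q: "Q \<in> carrier_mat n n" and PQ: "P * Q = 1\<^sub>m n" and QP: "Q * P = 1\<^sub>m n" and AB: "A = P * B * Q"
    by auto
  have "tr A = tr (P * (B * Q))" unfolding AB using P B Q by (simp add: assoc_mult_mat mult_carrier_mat)
  also have "\<dots> = tr ((B*Q)*P)" by (rule tr_comm, insert P B Q, auto)
  also have "(B*Q)*P = B" using B Q P QP by (simp add: assoc_mult_mat mult_carrier_mat)
  finally have trA: "tr A = tr B" .
  have "A * A = P * ((B * B) * Q)"
  proof -
    have AB': "A = P * (B * Q)" unfolding AB using P B Q by (simp add: assoc_mult_mat)
    have "A * A = P * ((B * Q) * (P * (B * Q)))" unfolding AB'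
      by (rule assoc_mult_mat[of P n n "B*Q" n "P*(B*Q)" n]) (use P B Q in auto)
    also have "(B * Q) * (P * (B * Q)) = B * (Q * (P * (B * Q)))"
      by (rule assoc_mult_mat[of B n n Q n "P*(B*Q)" n]) (use P B Q in auto)
    also have "Q * (P * (B * Q)) = (Q * P) * (B * Q)"
      by (rule assoc_mult_mat[of Q n n P n "B*Q" n, symmetric]) (use P B Q in auto)
    also have "\<dots> = B * Q" using QP B Q by simp
    also have "B * (B * Q) = (B * B) * Q"
      by (rule assoc_mult_mat[of B n n B n Q n, symmetric]) (use P B Q in auto)
    finally show ?thesis .
  qed
  hence "tr (A*A) = tr (P * ((B * B) * Q))" by simp
  also have "\<dots> = tr (((B*B)*Q)*P)" by (rule tr_comm, insert P B Q, auto)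
  also have "((B*B)*Q)*P = (B*B)*(Q*P)"
    by (rule assoc_mult_mat[of "B*B" n n Q n P n]) (use P B Q in auto)
  also have "\<dots> = B*B" using QP B by simp
  finally have trAA: "tr (A*A) = tr (B*B)" .
  have dgl: "es = map (\<lambda>i. B$$(i,i)) [0..<n]" using dg B by (simp add: diag_mat_def)
  show "tr A = sum_list es" unfolding trA dgl using B
    by (simp add: tr_def sum_list_sum_nth lessThan_atLeast0)
  have "(B*B)$$(i,i) = (B$$(i,i))^2" if i: "i < n" for i
  proof -
    have "(B*B)$$(i,i) = (\<Sum>k<n. B$$(i,k) * B$$(k,i))"
      using B i by (simp add: scalar_prod_def lessThan_atLeast0)
    also have "\<dots> = (\<Sum>k\<in>{i}. B$$(i,k) * B$$(k,i))"
    proof (rule sum.mono_neutral_right)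
      show "\<forall>k\<in>{..<n} - {i}. B$$(i,k) * B$$(k,i) = 0"
        using ut B i unfolding upper_triangular_def by (auto simp: nat_neq_iff)
    qed (use i in auto)
    finally show ?thesis by (simp add: power2_eq_square)
  qed
  thus "tr (A*A) = sum_list (map (\<lambda>e. e^2) es)" unfolding trAA dgl using B
    by (simp add: tr_def sum_list_sum_nth lessThan_atLeast0)
qed



lemma det_permute_both:
  fixes A :: "'a :: idom mat"
  assumes A: "A \<in> carrier_mat N N" and p: "p permutes {0..<N}"
  shows "det (mat N N (\<lambda>(i,j). A $$ (p i, p j))) = det A"
proof -
  define M1 where "M1 = mat N N (\<lambda>(i,j). A $$ (p i, j))"
  have M1: "M1 \<in> carrier_mat N N" unfolding M1_def by simp
  have d1: "det M1 = signof p * det A" unfolding M1_def by (rule det_permute_rows[OF A p])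
  have pN: "i < N \<Longrightarrow> p i < N" for i using p by (simp add: permutes_in_image)
  have eq: "mat N N (\<lambda>(i,j). A $$ (p i, p j)) = transpose_mat (mat N N (\<lambda>(i,j). (transpose_mat M1) $$ (p i, j)))"
    by (rule eq_matI, auto simp: M1_def pN)
  have "det (mat N N (\<lambda>(i,j). A $$ (p i, p j))) = det (mat N N (\<lambda>(i,j). (transpose_mat M1) $$ (p i, j)))"
    unfolding eq by (rule det_transpose[of _ N], simp)
  also have "\<dots> = signof p * det (transpose_mat M1)"
    by (rule det_permute_rows[OF _ p], use M1 in simp)
  also have "det (transpose_mat M1) = det M1" by (rule det_transpose[OF M1])
  finally have "det (mat N N (\<lambda>(i,j). A $$ (p i, p j))) = signof p * signof p * det A"
    using d1 by simp
  moreover have "(signof p :: 'a) * signof p = 1"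
  proof -
    have "sign p * sign p = (1::int)" by (simp add: sign_def)
    hence "(of_int (sign p * sign p) :: 'a) = 1" by simp
    thus ?thesis by (simp only: of_int_mult)
  qed
  ultimately show ?thesis by simp
qed

lemma char_poly_permute:
  fixes A :: "'a :: idom mat"
  assumes A: "A \<in> carrier_mat N N" and p: "p permutes {0..<N}"
  shows "char_poly (mat N N (\<lambda>(i,j). A $$ (p i, p j))) = char_poly A"
proof -
  have pN: "i < N \<Longrightarrow> p i < N" for i using p by (simp add: permutes_in_image)
  have inj: "i < N \<Longrightarrow> j < N \<Longrightarrow> p i = p j \<longleftrightarrow> i = j" for i j
    using p by (metis permutes_inj inj_eq)
  have "char_poly_matrix (mat N N (\<lambda>(i,j). A $$ (p i, p j))) =
     mat N N (\<lambda>(i,j). char_poly_matrix A $$ (p i, p j))"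
    by (rule eq_matI, insert A, auto simp: char_poly_matrix_def pN inj)
  thus ?thesis unfolding char_poly_def
    by (simp add: det_permute_both[OF _ p] A)
qed

lemma A_alpha_carrier[simp]: "A_alpha \<alpha> n E \<in> carrier_mat n n"
  unfolding A_alpha_def deg_mat_def adj_mat_def by simp

lemma A_alpha_dim[simp]: "dim_row (A_alpha \<alpha> n E) = n" "dim_col (A_alpha \<alpha> n E) = n"
  unfolding A_alpha_def deg_mat_def adj_mat_def by simp_all

lemma A_alpha_entry:
  "i < n \<Longrightarrow> j < n \<Longrightarrow> A_alpha \<alpha> n E $$ (i,j) =
     (if i = j then \<alpha> * real (degree n E i) else 0) + (1 - \<alpha>) * (if E i j then 1 else 0)"
  unfolding A_alpha_def deg_mat_def adj_mat_def by simp

lemma A_alpha_sym: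
  assumes "is_graph n E" "i < n" "j < n"
  shows "A_alpha \<alpha> n E $$ (i,j) = A_alpha \<alpha> n E $$ (j,i)"
  using assms unfolding A_alpha_entry[OF assms(2,3)] A_alpha_entry[OF assms(3,2)] is_graph_def by auto

lemma A_alpha_permute:
  assumes g: "bij_betw g {..<N} {..<N}"
    and E'': "\<And>i j. E'' i j \<longleftrightarrow> i < N \<and> j < N \<and> F (g i) (g j)"
  shows "char_poly (A_alpha \<alpha> N E'') = char_poly (A_alpha \<alpha> N F)"
proof -
  define p where "p x = (if x < N then g x else x)" for x
  have pg: "x < N \<Longrightarrow> p x = g x" for x unfolding p_def by simp
  have bp: "bij_betw p {0..<N} {0..<N}"
    using g unfolding lessThan_atLeast0[symmetric] by (rule bij_betw_cong[THEN iffD1, rotated], auto simp: pg)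
  have p: "p permutes {0..<N}" by (rule bij_imp_permutes[OF bp], simp add: p_def)
  have gN: "i < N \<Longrightarrow> g i < N" for i using g by (auto simp: bij_betw_def)
  have ginj: "i < N \<Longrightarrow> j < N \<Longrightarrow> g i = g j \<longleftrightarrow> i = j" for i j
    using g by (auto simp: bij_betw_def inj_on_def)
  have deg: "degree N E'' i = degree N F (g i)" if i: "i < N" for i
  proof -
    have "g ` {j. j < N \<and> E'' i j} = {j. j < N \<and> F (g i) j}"
    proof
      show "g ` {j. j < N \<and> E'' i j} \<subseteq> {j. j < N \<and> F (g i) j}" using E'' gN by auto
      show "{j. j < N \<and> F (g i) j} \<subseteq> g ` {j. j < N \<and> E'' i j}"
      proof
        fix w assume w: "w \<in> {j. j < N \<and> F (g i) j}"
        hence "w \<in> g ` {..<N}" using g unfolding bij_betw_def by simp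
        then obtain j where j: "j < N" "g j = w" by auto
        thus "w \<in> g ` {j. j < N \<and> E'' i j}" using w E'' i by auto
      qed
    qed
    moreover have "inj_on g {j. j < N \<and> E'' i j}"
      using g unfolding bij_betw_def by (rule inj_on_subset[OF conjunct1]) auto
    ultimately show ?thesis unfolding degree_def by (metis card_image)
  qed
  have "A_alpha \<alpha> N E'' = mat N N (\<lambda>(i,j). A_alpha \<alpha> N F $$ (p i, p j))"
    by (rule eq_matI, auto simp: A_alpha_entry pg gN deg ginj E'')
  thus ?thesis using char_poly_permute[OF A_alpha_carrier p] by simp
qed



lemma det_unit_lower:
  fixes P :: "'a :: comm_ring_1 mat"
  assumes P: "P \<in> carrier_mat N N" and lt: "\<And>i j. i < j \<Longrightarrow> j < N \<Longrightarrow> P $$ (i,j) = 0"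
    and dg: "\<And>i. i < N \<Longrightarrow> P $$ (i,i) = 1"
  shows "det P = 1"
proof -
  have "det P = prod_list (diag_mat P)" by (rule det_lower_triangular[OF lt P])
  also have "diag_mat P = map (\<lambda>i. 1) [0..<N]" using P dg by (auto simp: diag_mat_def)
  also have "prod_list \<dots> = 1" by (induct N) auto
  finally show ?thesis .
qed

lemma equit_det:
  fixes M :: "real mat" and cl :: "nat \<Rightarrow> nat"
  assumes M: "M \<in> carrier_mat N N" and aN: "a \<le> N"
    and cla: "\<And>k. k < a \<Longrightarrow> cl k = k" and clN: "\<And>k. k < N \<Longrightarrow> cl k < a"
    and equit: "\<And>k j. a \<le> k \<Longrightarrow> k < N \<Longrightarrow> j < a \<Longrightarrow>
        (\<Sum>l\<in>{l. l < N \<and> cl l = j}. M$$(k,l)) = (\<Sum>l\<in>{l. l < N \<and> cl l = j}. M$$(cl k,l))"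
  shows "det M = det (mat a a (\<lambda>(k,j). \<Sum>l\<in>{l. l < N \<and> cl l = j}. M$$(k,l))) *
     det (mat (N-a) (N-a) (\<lambda>(k,j). M$$(k+a,j+a) - M$$(cl (k+a),j+a)))"
proof -
  define P where "P = mat N N (\<lambda>(k,l). if k = l then 1 else if l < a \<and> cl k = l then 1 else (0::real))"
  define Pi where "Pi = mat N N (\<lambda>(k,l). if k = l then 1 else if l < a \<and> cl k = l then -1 else (0::real))"
  have P: "P \<in> carrier_mat N N" and Pi: "Pi \<in> carrier_mat N N" unfolding P_def Pi_def by auto
  have dP: "det P = 1"
    by (rule det_unit_lower[OF P], auto simp: P_def, metis cla less_trans nat_neq_iff)
  have dPi: "det Pi = 1"
    by (rule det_unit_lower[OF Pi], auto simp: Pi_def, metis cla less_trans nat_neq_iff)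
  define MP where "MP k j = (if j < a then (\<Sum>l\<in>{l. l < N \<and> cl l = j}. M$$(k,l)) else M$$(k,j))" for k j
  have MPe: "(M * P) $$ (k,j) = MP k j" if k: "k < N" and j: "j < N" for k j
  proof -
    have "(M * P) $$ (k,j) = (\<Sum>l<N. M$$(k,l) * P$$(l,j))"
      using M P k j by (simp add: scalar_prod_def lessThan_atLeast0)
    also have "\<dots> = (\<Sum>l<N. if (if j < a then cl l = j else l = j) then M$$(k,l) else 0)"
    proof (rule sum.cong[OF refl])
      fix l assume l: "l \<in> {..<N}"
      show "M$$(k,l) * P$$(l,j) = (if (if j < a then cl l = j else l = j) then M$$(k,l) else 0)"
        using l j cla[of j] unfolding P_def by auto
    qed
    also have "\<dots> = MP k j"
    proof (cases "j < a")
      case True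
      then show ?thesis unfolding MP_def
        by (simp add: sum.inter_filter[symmetric] lessThan_def conj_commute)
    next
      case False
      then show ?thesis unfolding MP_def using j by simp
    qed
    finally show ?thesis .
  qed
  define T where "T = Pi * (M * P)"
  have MPc: "M * P \<in> carrier_mat N N" using M P by simp
  have T: "T \<in> carrier_mat N N" unfolding T_def using Pi MPc by simp
  have Te: "T $$ (k,j) = MP k j - (if a \<le> k then MP (cl k) j else 0)" if k: "k < N" and j: "j < N" for k j
  proof -
    have "T $$ (k,j) = (\<Sum>l<N. Pi$$(k,l) * (M*P)$$(l,j))"
      unfolding T_def using Pi MPc M P k j
      by (subst index_mult_mat(1)) (auto simp: scalar_prod_def lessThan_atLeast0 carrier_matD intro!: sum.cong)
    also have "\<dots> = (\<Sum>l<N. (if l = k then MP l j else 0) - (if a \<le> k \<and> l = cl k then MP l j else 0))"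
    proof (rule sum.cong[OF refl])
      fix l assume l: "l \<in> {..<N}"
      show "Pi$$(k,l) * (M*P)$$(l,j) = (if l = k then MP l j else 0) - (if a \<le> k \<and> l = cl k then MP l j else 0)"
        using l j k cla[of k] clN[of k] MPe[of l j] unfolding Pi_def by auto
    qed
    also have "\<dots> = MP k j - (if a \<le> k then MP (cl k) j else 0)"
      using k clN[of k] aN by (simp add: sum_subtractf)
    finally show ?thesis .
  qed
  have "det T = det Pi * det (M * P)" unfolding T_def by (rule det_mult[OF Pi MPc])
  also have "det (M * P) = det M * det P" by (rule det_mult[OF M P])
  finally have dT: "det T = det M" using dP dPi by simp
  define T11 where "T11 = mat a a (\<lambda>(k,j). \<Sum>l\<in>{l. l < N \<and> cl l = j}. M$$(k,l))"
  define T22 where "T22 = mat (N-a) (N-a) (\<lambda>(k,j). M$$(k+a,j+a) - M$$(cl (k+a),j+a))"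
  define T12 where "T12 = mat a (N-a) (\<lambda>(k,j). T$$(k,j+a))"
  have "T = four_block_mat T11 T12 (0\<^sub>m (N-a) a) T22"
  proof (rule eq_matI)
    fix i j assume i: "i < dim_row (four_block_mat T11 T12 (0\<^sub>m (N-a) a) T22)"
      and j: "j < dim_col (four_block_mat T11 T12 (0\<^sub>m (N-a) a) T22)"
    hence i: "i < N" and j: "j < N" using aN by (auto simp: T11_def T22_def)
    show "T $$ (i,j) = four_block_mat T11 T12 (0\<^sub>m (N-a) a) T22 $$ (i,j)"
    proof (cases "i < a")
      case True
      then show ?thesis using i j cla[of i]
        by (auto simp: four_block_mat_def T11_def T12_def T22_def Te MP_def)
    next
      case False
      then show ?thesis using i j clN[of i] equit[of i j] cla[of i]
        by (auto simp: four_block_mat_def T11_def T12_def T22_def Te MP_def)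
    qed
  qed (use aN in \<open>auto simp: T11_def T22_def T_def P_def Pi_def\<close>)
  hence "det T = det (four_block_mat T11 T12 (0\<^sub>m (N-a) a) T22)" by (rule arg_cong)
  also have "\<dots> = det T11 * det T22"
    by (rule det_four_block_mat_lower_left_zero) (auto simp: T11_def T12_def T22_def)
  finally have "det T = det T11 * det T22" .
  thus ?thesis using dT unfolding T11_def T22_def by simp
qed



definition charm :: "real mat \<Rightarrow> real \<Rightarrow> real mat" where
  "charm A x = mat (dim_row A) (dim_row A) (\<lambda>(i,j). (if i = j then x else 0) - A$$(i,j))"

lemma charm_carrier[simp]: "A \<in> carrier_mat N N \<Longrightarrow> charm A x \<in> carrier_mat N N"
  unfolding charm_def by simp

lemma poly_char_poly_charm:
  assumes A: "A \<in> carrier_mat N N"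
  shows "poly (char_poly A) x = det (charm A x)"
proof -
  have "poly (char_poly A) x = det (- char_matrix A x)" by (rule char_poly_matrix[OF A])
  also have "- char_matrix A x = charm A x"
    by (rule eq_matI, insert A, auto simp: char_matrix_def charm_def)
  finally show ?thesis .
qed

lemma sum_ind: "finite A \<Longrightarrow> (\<Sum>l\<in>A. if P l then (1::real) else 0) = real (card {l\<in>A. P l})"
  by (simp add: sum.inter_filter[symmetric])

lemma A_alpha_rowsum:
  assumes G: "is_graph n X" and R: "regular n X r" and k: "k < n"
  shows "(\<Sum>l<n. A_alpha \<alpha> n X $$ (k,l)) = real r"
proof -
  have "(\<Sum>l<n. A_alpha \<alpha> n X $$ (k,l)) =
     (\<Sum>l<n. (if l = k then \<alpha> * real (degree n X k) else 0)) + (1 - \<alpha>) * (\<Sum>l<n. if X k l then 1 else 0)"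
    using k by (simp add: A_alpha_entry sum.distrib sum_distrib_left)
  also have "(\<Sum>l<n. if X k l then (1::real) else 0) = real (degree n X k)"
    unfolding degree_def by (simp add: sum_ind lessThan_def)
  also have "degree n X k = r" using R k unfolding regular_def by auto
  finally show ?thesis using k by (simp add: algebra_simps)
qed

definition Cp :: "real \<Rightarrow> nat \<Rightarrow> (nat \<Rightarrow> nat \<Rightarrow> bool) \<Rightarrow> real \<Rightarrow> real mat" where
  "Cp \<alpha> n X y = mat (n-1) (n-1) (\<lambda>(k,j). charm (A_alpha \<alpha> n X) y $$ (k+1,j+1) - charm (A_alpha \<alpha> n X) y $$ (0,j+1))"

lemma reg_det:
  assumes G: "is_graph n X" and R: "regular n X r" and n: "n \<ge> 1"
  shows "poly (char_poly (A_alpha \<alpha> n X)) y = (y - real r) * det (Cp \<alpha> n X y)"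
proof -
  let ?M = "charm (A_alpha \<alpha> n X) y"
  have M: "?M \<in> carrier_mat n n" by simp
  have rs: "(\<Sum>l\<in>{l. l < n \<and> (0::nat) = j}. ?M$$(k,l)) = (if j = 0 then y - real r else 0)"
    if k: "k < n" for k j
  proof (cases "j = 0")
    case True
    have "(\<Sum>l\<in>{l. l < n}. ?M$$(k,l)) = (\<Sum>l<n. (if k = l then y else 0) - A_alpha \<alpha> n X $$ (k,l))"
      using k by (simp add: charm_def lessThan_def)
    also have "\<dots> = y - real r" using k A_alpha_rowsum[OF G R k, of \<alpha>]
      by (simp add: sum_subtractf)
    finally show ?thesis using True by simp
  qed simp
  have "det ?M = det (mat 1 1 (\<lambda>(k,j). \<Sum>l\<in>{l. l < n \<and> (0::nat) = j}. ?M$$(k,l))) *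
     det (mat (n-1) (n-1) (\<lambda>(k,j). ?M$$(k+1,j+1) - ?M$$(0,j+1)))"
  proof (rule equit_det[OF M, of 1 "\<lambda>_. 0"])
    fix k j :: nat assume "1 \<le> k" "k < n" "j < 1"
    thus "(\<Sum>l\<in>{l. l < n \<and> (0::nat) = j}. ?M$$(k,l)) = (\<Sum>l\<in>{l. l < n \<and> (0::nat) = j}. ?M$$(0,l))"
      using rs[of k j] rs[of 0 j] by simp
  qed (use n in auto)
  also have "det (mat 1 1 (\<lambda>(k,j). \<Sum>l\<in>{l. l < n \<and> (0::nat) = j}. ?M$$(k,l))) = y - real r"
    using rs[of 0 0] n by (simp add: det_single)
  finally show ?thesis unfolding Cp_def poly_char_poly_charm[OF A_alpha_carrier] .
qed



lemma join_degree:
  assumes G: "is_graph n X" and R: "regular n X r"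
  shows "i < n \<Longrightarrow> degree (n+m) (join_complete n X m) i = r + m"
    and "n \<le> i \<Longrightarrow> i < n + m \<Longrightarrow> degree (n+m) (join_complete n X m) i = n + m - 1"
proof -
  assume i: "i < n"
  have "{j. j < n + m \<and> join_complete n X m i j} = {j. j < n \<and> X i j} \<union> {n..<n+m}"
    using G i unfolding join_complete_def is_graph_def by auto
  moreover have "card ({j. j < n \<and> X i j} \<union> {n..<n+m}) = card {j. j < n \<and> X i j} + m"
    by (subst card_Un_disjoint) auto
  moreover have "card {j. j < n \<and> X i j} = r" using R i unfolding regular_def degree_def by auto
  ultimately show "degree (n+m) (join_complete n X m) i = r + m" unfolding degree_def by simp
next
  assume i: "n \<le> i" "i < n + m"
  have "{j. j < n + m \<and> join_complete n X m i j} = {..<n+m} - {i}"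
    using i unfolding join_complete_def by auto
  thus "degree (n+m) (join_complete n X m) i = n + m - 1" unfolding degree_def using i by simp
qed

lemma AJ_entry:
  assumes G: "is_graph n X" and R: "regular n X r" and i: "i < n + m" and j: "j < n + m"
  shows "A_alpha \<alpha> (n+m) (join_complete n X m) $$ (i,j) =
    (if i = j then \<alpha> * real (if i < n then r + m else n + m - 1) else 0) +
    (1 - \<alpha>) * (if i \<noteq> j \<and> (i < n \<and> j < n \<longrightarrow> X i j) then 1 else 0)"
  using i j join_degree[OF G R] unfolding A_alpha_entry[OF i j] join_complete_def
  by auto

lemma AJ_rowsum_X:
  assumes G: "is_graph n X" and R: "regular n X r" and i0: "i0 < n + m"
  shows "(\<Sum>i<n. A_alpha \<alpha> (n+m) (join_complete n X m) $$ (i0,i)) =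
     (if i0 < n then \<alpha> * real (r + m) + (1 - \<alpha>) * real r else (1 - \<alpha>) * real n)"
proof (cases "i0 < n")
  case True
  have "(\<Sum>i<n. A_alpha \<alpha> (n+m) (join_complete n X m) $$ (i0,i)) =
     (\<Sum>i<n. (if i0 = i then \<alpha> * real (r + m) else 0)) + (1 - \<alpha>) * (\<Sum>i<n. if X i0 i then 1 else 0)"
  proof -
    have "\<And>i. i < n \<Longrightarrow> A_alpha \<alpha> (n+m) (join_complete n X m) $$ (i0,i) =
        (if i0 = i then \<alpha> * real (r + m) else 0) + (1 - \<alpha>) * (if X i0 i then 1 else 0)"
      using True G unfolding is_graph_def by (subst AJ_entry[OF G R]) auto
    thus ?thesis by (simp add: sum.distrib sum_distrib_left)
  qed
  also have "(\<Sum>i<n. if X i0 i then (1::real) else 0) = real r"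
    using R True unfolding regular_def degree_def by (simp add: sum_ind lessThan_def)
  finally show ?thesis using True by simp
next
  case False
  have "\<And>i. i < n \<Longrightarrow> A_alpha \<alpha> (n+m) (join_complete n X m) $$ (i0,i) = 1 - \<alpha>"
    using False i0 by (subst AJ_entry[OF G R]) auto
  thus ?thesis using False by simp
qed

lemma AJ_rowsum_K:
  assumes G: "is_graph n X" and R: "regular n X r" and i0: "i0 < n + m"
  shows "(\<Sum>i\<in>{n..<n+m}. A_alpha \<alpha> (n+m) (join_complete n X m) $$ (i0,i)) =
     (if i0 < n then (1 - \<alpha>) * real m else \<alpha> * real (n + m - 1) + (1 - \<alpha>) * real (m - 1))"
proof (cases "i0 < n")
  case True
  have "\<And>i. i \<in> {n..<n+m} \<Longrightarrow> A_alpha \<alpha> (n+m) (join_complete n X m) $$ (i0,i) = 1 - \<alpha>"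
    using True i0 by (subst AJ_entry[OF G R]) auto
  thus ?thesis using True by simp
next
  case False
  have "\<And>i. i \<in> {n..<n+m} \<Longrightarrow> A_alpha \<alpha> (n+m) (join_complete n X m) $$ (i0,i) =
     (if i0 = i then \<alpha> * real (n + m - 1) else 0) + (1 - \<alpha>) * (if i \<in> {n..<n+m} - {i0} then 1 else 0)"
    using False i0 by (subst AJ_entry[OF G R]) auto
  hence "(\<Sum>i\<in>{n..<n+m}. A_alpha \<alpha> (n+m) (join_complete n X m) $$ (i0,i)) =
     (\<Sum>i\<in>{n..<n+m}. (if i0 = i then \<alpha> * real (n + m - 1) else 0)) +
     (1 - \<alpha>) * (\<Sum>i\<in>{n..<n+m}. if i \<in> {n..<n+m} - {i0} then 1 else 0)"
    by (simp add: sum.distrib sum_distrib_left)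
  also have "(\<Sum>i\<in>{n..<n+m}. if i \<in> {n..<n+m} - {i0} then (1::real) else 0) = real (m - 1)"
  proof -
    have "{i \<in> {n..<n+m}. i \<in> {n..<n+m} - {i0}} = {n..<n+m} - {i0}" by auto
    moreover have "card ({n..<n+m} - {i0}) = m - 1" using False i0 by simp
    ultimately show ?thesis by (simp only: sum_ind[OF finite_atLeastLessThan])
  qed
  finally show ?thesis using False i0 by simp
qed



definition lsig :: "nat \<Rightarrow> nat \<Rightarrow> nat" where
  "lsig n k = (if k = 0 then 0 else if k = 1 then n else if k \<le> n then k - 1 else k)"
definition lcl :: "nat \<Rightarrow> nat \<Rightarrow> nat" where
  "lcl n k = (if k = 0 \<or> (2 \<le> k \<and> k \<le> n) then 0 else 1)"

context
  fixes n m :: nat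
  assumes n: "n \<ge> 1" and m: "m \<ge> 1"
begin

lemma lsig_lt: "k < n + m \<Longrightarrow> lsig n k < n + m"
  using n m unfolding lsig_def by auto

lemma lsig_X: "k < n + m \<Longrightarrow> lsig n k < n \<longleftrightarrow> lcl n k = 0"
  using n m unfolding lsig_def lcl_def by auto

lemma lsig_inj: "inj_on (lsig n) {..<n+m}"
  using n m unfolding inj_on_def lsig_def by auto

lemma lsig_bij: "bij_betw (lsig n) {..<n+m} {..<n+m}"
proof -
  have "lsig n ` {..<n+m} \<subseteq> {..<n+m}" using lsig_lt by auto
  hence "lsig n ` {..<n+m} = {..<n+m}" using lsig_inj by (simp add: endo_inj_surj)
  thus ?thesis using lsig_inj unfolding bij_betw_def by simp
qed

lemma lsig_permutes: "lsig n permutes {0..<n+m}"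
proof (rule bij_imp_permutes)
  show "bij_betw (lsig n) {0..<n+m} {0..<n+m}" using lsig_bij by (simp add: lessThan_atLeast0)
  show "\<And>x. x \<notin> {0..<n + m} \<Longrightarrow> lsig n x = x" using n m unfolding lsig_def by auto
qed

lemma lsig_bij_sub:
  assumes "\<And>k. k < n + m \<Longrightarrow> (lsig n k \<in> B \<longleftrightarrow> lcl n k = j)" and "B \<subseteq> {..<n+m}"
  shows "bij_betw (lsig n) {l. l < n + m \<and> lcl n l = j} B"
proof -
  have "inj_on (lsig n) {l. l < n + m \<and> lcl n l = j}"
    by (rule inj_on_subset[OF lsig_inj]) auto
  moreover have "lsig n ` {l. l < n + m \<and> lcl n l = j} = B"
  proof
    show "lsig n ` {l. l < n + m \<and> lcl n l = j} \<subseteq> B" using assms(1) by auto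
    show "B \<subseteq> lsig n ` {l. l < n + m \<and> lcl n l = j}"
    proof
      fix b assume b: "b \<in> B"
      hence "b \<in> lsig n ` {..<n+m}" using lsig_bij assms(2) unfolding bij_betw_def by auto
      then obtain l where l: "l < n + m" "b = lsig n l" by auto
      thus "b \<in> lsig n ` {l. l < n + m \<and> lcl n l = j}" using assms(1)[of l] b by auto
    qed
  qed
  ultimately show ?thesis unfolding bij_betw_def by simp
qed

lemma reindex0: "(\<Sum>l\<in>{l. l < n + m \<and> lcl n l = 0}. f (lsig n l)) = (\<Sum>i<n. f i)"
  by (rule sum.reindex_bij_betw[OF lsig_bij_sub]) (use lsig_X lsig_lt in auto)

lemma reindex1: "(\<Sum>l\<in>{l. l < n + m \<and> lcl n l = 1}. f (lsig n l)) = (\<Sum>i\<in>{n..<n+m}. f i)"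
proof (rule sum.reindex_bij_betw[OF lsig_bij_sub])
  fix k assume k: "k < n + m"
  show "lsig n k \<in> {n..<n+m} \<longleftrightarrow> lcl n k = 1"
    using lsig_X[OF k] lsig_lt[OF k] by (auto simp: lcl_def split: if_splits)
qed auto

end



definition Rq :: "real \<Rightarrow> nat \<Rightarrow> nat \<Rightarrow> nat \<Rightarrow> real \<Rightarrow> nat \<Rightarrow> nat \<Rightarrow> real" where
  "Rq \<alpha> n m r x k j = (if k = j then x else 0) -
     (if k = 0 then (if j = 0 then \<alpha> * real (r + m) + (1 - \<alpha>) * real r else (1 - \<alpha>) * real m)
      else (if j = 0 then (1 - \<alpha>) * real n else \<alpha> * real (n + m - 1) + (1 - \<alpha>) * real (m - 1)))"

definition qq :: "real \<Rightarrow> nat \<Rightarrow> nat \<Rightarrow> nat \<Rightarrow> real \<Rightarrow> real" where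
  "qq \<alpha> n m r x = det (mat 2 2 (\<lambda>(k,j). Rq \<alpha> n m r x k j)) *
      (x - \<alpha> * real (n + m - 1) + (1 - \<alpha>)) ^ (m - 1)"

lemma join_identity:
  assumes G: "is_graph n X" and R: "regular n X r" and n: "n \<ge> 1" and m: "m \<ge> 1"
  shows "poly (char_poly (A_alpha \<alpha> (n+m) (join_complete n X m))) x * (x - \<alpha> * real m - real r) =
     qq \<alpha> n m r x * poly (char_poly (A_alpha \<alpha> n X)) (x - \<alpha> * real m)"
proof -
  define N where "N = n + m"
  define AJ where "AJ = A_alpha \<alpha> (n+m) (join_complete n X m)"
  define AL where "AL = mat N N (\<lambda>(i,j). AJ $$ (lsig n i, lsig n j))"
  define M where "M = charm AL x"
  have AJc: "AJ \<in> carrier_mat N N" unfolding AJ_def N_def by simp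
  have ALc: "AL \<in> carrier_mat N N" unfolding AL_def by simp
  have Mc: "M \<in> carrier_mat N N" unfolding M_def using ALc by simp
  have Me: "M $$ (k,l) = (if k = l then x else 0) - AJ $$ (lsig n k, lsig n l)" if "k < N" "l < N" for k l
    using that unfolding M_def AL_def charm_def by simp
  have cpJ: "poly (char_poly AJ) x = det M"
  proof -
    have "char_poly AL = char_poly AJ" unfolding AL_def
      by (rule char_poly_permute[OF AJc], unfold N_def, rule lsig_permutes[OF n m])
    thus ?thesis unfolding M_def using poly_char_poly_charm[OF ALc] by simp
  qed
  have lsN: "k < N \<Longrightarrow> lsig n k < N" for k using lsig_lt[OF n m] N_def by simp
  have sums: "(\<Sum>l\<in>{l. l < N \<and> lcl n l = j}. M$$(k,l)) = Rq \<alpha> n m r x (lcl n k) j"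
    if k: "k < N" and j: "j < 2" for k j
  proof -
    have "(\<Sum>l\<in>{l. l < N \<and> lcl n l = j}. M$$(k,l)) =
       (\<Sum>l\<in>{l. l < N \<and> lcl n l = j}. (if k = l then x else 0)) -
       (\<Sum>l\<in>{l. l < N \<and> lcl n l = j}. AJ $$ (lsig n k, lsig n l))"
      by (simp add: Me k sum_subtractf)
    also have "(\<Sum>l\<in>{l. l < N \<and> lcl n l = j}. (if k = l then x else 0)) = (if lcl n k = j then x else 0)"
      using k by (simp add: sum.delta)
    also have "(\<Sum>l\<in>{l. l < N \<and> lcl n l = j}. AJ $$ (lsig n k, lsig n l)) =
       (if j = 0 then (\<Sum>i<n. AJ $$ (lsig n k, i)) else (\<Sum>i\<in>{n..<n+m}. AJ $$ (lsig n k, i)))"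
      using j reindex0[OF n m, of "\<lambda>i. AJ $$ (lsig n k, i)"] reindex1[OF n m, of "\<lambda>i. AJ $$ (lsig n k, i)"]
      unfolding N_def using j by (cases "j = 0") (auto simp: less_2_cases_iff)
    also have "\<dots> = (if j = 0 then (if lsig n k < n then \<alpha> * real (r + m) + (1 - \<alpha>) * real r else (1 - \<alpha>) * real n)
        else (if lsig n k < n then (1 - \<alpha>) * real m else \<alpha> * real (n + m - 1) + (1 - \<alpha>) * real (m - 1)))"
      unfolding AJ_def using AJ_rowsum_X[OF G R, of "lsig n k" m \<alpha>] AJ_rowsum_K[OF G R, of "lsig n k" m \<alpha>]
        lsN[OF k] unfolding N_def by simp
    finally show ?thesis using lsig_X[OF n m, of k] k j unfolding N_def Rq_def lcl_def
      by (auto split: if_splits)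
  qed
  have cla: "k < 2 \<Longrightarrow> lcl n k = k" for k unfolding lcl_def by auto
  have clN: "lcl n k < 2" for k unfolding lcl_def by auto
  have "det M = det (mat 2 2 (\<lambda>(k,j). \<Sum>l\<in>{l. l < N \<and> lcl n l = j}. M$$(k,l))) *
     det (mat (N-2) (N-2) (\<lambda>(k,j). M$$(k+2,j+2) - M$$(lcl n (k+2),j+2)))"
  proof (rule equit_det[OF Mc])
    show "2 \<le> N" using n m N_def by simp
    fix k j :: nat assume "2 \<le> k" "k < N" "j < 2"
    thus "(\<Sum>l\<in>{l. l < N \<and> lcl n l = j}. M$$(k,l)) = (\<Sum>l\<in>{l. l < N \<and> lcl n l = j}. M$$(lcl n k,l))"
      using sums[of k j] sums[of "lcl n k" j] cla[OF clN[of k]] clN[of k] by simp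
  qed (use cla clN in auto)
  also have "mat 2 2 (\<lambda>(k,j). \<Sum>l\<in>{l. l < N \<and> lcl n l = j}. M$$(k,l)) = mat 2 2 (\<lambda>(k,j). Rq \<alpha> n m r x k j)"
    by (rule eq_matI, use sums cla n m N_def in auto)
  also have "mat (N-2) (N-2) (\<lambda>(k,j). M$$(k+2,j+2) - M$$(lcl n (k+2),j+2)) =
      four_block_mat (Cp \<alpha> n X (x - \<alpha> * real m)) (0\<^sub>m (n-1) (m-1)) (0\<^sub>m (m-1) (n-1))
        ((x - \<alpha> * real (n + m - 1) + (1 - \<alpha>)) \<cdot>\<^sub>m 1\<^sub>m (m-1))" (is "?L = ?R")
  proof (rule eq_matI)
    fix k j assume "k < dim_row ?R" "j < dim_col ?R"
    hence k: "k < N - 2" and j: "j < N - 2" using n m N_def by (auto simp: Cp_def)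
    have lsX: "lsig n (i+2) = i+1 \<and> lcl n (i+2) = 0" if "i < n - 1" for i
      using that unfolding lsig_def lcl_def by auto
    have lsK: "lsig n (i+2) = i+2 \<and> lcl n (i+2) = 1" if "n - 1 \<le> i" for i
      using that n unfolding lsig_def lcl_def by auto
    have ls0: "lsig n 0 = 0" "lsig n 1 = n" unfolding lsig_def by auto
    have degX: "i < n \<Longrightarrow> degree n X i = r" for i using R unfolding regular_def by auto
    have Xirr: "\<not> X i i" for i using G unfolding is_graph_def by auto
    have AXe: "A_alpha \<alpha> n X $$ (i,l) = (if i = l then \<alpha> * real r else 0) + (1 - \<alpha>) * (if X i l then 1 else 0)"
      if "i < n" "l < n" for i l using that by (simp add: A_alpha_entry degX)
    have Lkj: "?L $$ (k,j) = M$$(k+2,j+2) - M$$(lcl n (k+2),j+2)" using k j by simp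
    show "?L $$ (k,j) = ?R $$ (k,j)"
    proof (cases "k < n - 1")
      case kX: True
      show ?thesis
      proof (cases "j < n - 1")
        case jX: True
        have kn: "Suc k < n" "Suc j < n" using kX jX by auto
        have "?R $$ (k,j) = Cp \<alpha> n X (x - \<alpha> * real m) $$ (k,j)"
          using kX jX by (simp add: Cp_def)
        also have "\<dots> = ((if k = j then x - \<alpha> * real m else 0) - A_alpha \<alpha> n X $$ (k+1,j+1))
             + A_alpha \<alpha> n X $$ (0,j+1)"
          using kX jX n by (simp add: Cp_def charm_def)
        also have "\<dots> = ?L $$ (k,j)" unfolding Lkj using kX jX n m lsX[OF kX] lsX[OF jX] ls0 kn
          by (simp add: Me N_def AJ_def AJ_entry[OF G R] AXe Xirr distrib_left)
        finally show ?thesis by simp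
      next
        case jK: False
        hence jK: "n - 1 \<le> j" by simp
        hence jK': "\<not> Suc (Suc j) < n" "Suc (Suc j) \<noteq> n" by auto
        have "?R $$ (k,j) = 0" using kX jK j N_def n m by (simp add: Cp_def)
        also have "0 = ?L $$ (k,j)" unfolding Lkj using kX jK j n m lsX[OF kX] lsK[OF jK] ls0 jK'
          by (simp add: Me N_def AJ_def AJ_entry[OF G R])
        finally show ?thesis by simp
      qed
    next
      case kK: False
      hence kK: "n - 1 \<le> k" by simp
      hence kK': "\<not> Suc (Suc k) < n" "Suc (Suc k) \<noteq> n" by auto
      show ?thesis
      proof (cases "j < n - 1")
        case jX: True
        have jX': "Suc j < n" using jX by simp
        have "?R $$ (k,j) = 0" using kK jX k N_def n m by (simp add: Cp_def)
        also have "0 = ?L $$ (k,j)" unfolding Lkj using kK jX k n m lsK[OF kK] lsX[OF jX] ls0 kK' jX'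
          by (simp add: Me N_def AJ_def AJ_entry[OF G R])
        finally show ?thesis by simp
      next
        case jK: False
        hence jK: "n - 1 \<le> j" by simp
        hence jK': "\<not> Suc (Suc j) < n" "Suc (Suc j) \<noteq> n" by auto
        have "?R $$ (k,j) = (if k = j then x - \<alpha> * real (n + m - 1) + (1 - \<alpha>) else 0)"
          using kK jK k j N_def n m by (auto simp: Cp_def)
        also have "\<dots> = ?L $$ (k,j)" unfolding Lkj using kK jK k j n m lsK[OF kK] lsK[OF jK] ls0 kK' jK'
          by (simp add: Me N_def AJ_def AJ_entry[OF G R])
        finally show ?thesis by simp
      qed
    qed
  qed (use n m N_def in \<open>auto simp: Cp_def\<close>)
  also have "det ?R = det (Cp \<alpha> n X (x - \<alpha> * real m)) * (x - \<alpha> * real (n + m - 1) + (1 - \<alpha>)) ^ (m - 1)"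
    by (subst det_four_block_mat_lower_left_zero[of _ "n-1" _ "m-1"]) (auto simp: Cp_def)
  finally have dM: "det M = qq \<alpha> n m r x * det (Cp \<alpha> n X (x - \<alpha> * real m))"
    unfolding qq_def by simp
  have "poly (char_poly (A_alpha \<alpha> n X)) (x - \<alpha> * real m) = (x - \<alpha> * real m - real r) * det (Cp \<alpha> n X (x - \<alpha> * real m))"
    by (rule reg_det[OF G R n])
  thus ?thesis using cpJ dM unfolding AJ_def by simp
qed



lemma split_cospec:
  fixes A B :: "real mat"
  assumes A: "A \<in> carrier_mat N N" and symA: "\<And>i j. i < N \<Longrightarrow> j < N \<Longrightarrow> A$$(i,j) = A$$(j,i)"
    and B: "B \<in> carrier_mat N N" and symB: "\<And>i j. i < N \<Longrightarrow> j < N \<Longrightarrow> B$$(i,j) = B$$(j,i)"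
    and ord: "\<And>x. Polynomial.order x (char_poly A) = Polynomial.order x (char_poly B)"
  shows "char_poly A = char_poly B" "tr A = tr B" "tr (A*A) = tr (B*B)"
proof -
  obtain es where es: "char_poly A = (\<Prod>e\<leftarrow>es. [:-e,1:])" using sym_split[OF A symA] by blast
  obtain fs where fs: "char_poly B = (\<Prod>e\<leftarrow>fs. [:-e,1:])" using sym_split[OF B symB] by blast
  have "mset es = mset fs"
  proof (rule multiset_eqI)
    fix x show "count (mset es) x = count (mset fs) x"
      using ord[of x] unfolding es fs order_lin_prod by simp
  qed
  hence mm: "mset (map f es) = mset (map f fs)" for f :: "real \<Rightarrow> 'b" by simp
  have "(\<Prod>e\<leftarrow>es. [:-e,1::real:]) = (\<Prod>e\<leftarrow>fs. [:-e,1:])"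
    by (metis mm prod_mset_prod_list)
  thus "char_poly A = char_poly B" using es fs by simp
  have "sum_list es = sum_list fs" by (metis mm[of "\<lambda>x. x"] map_ident sum_mset_sum_list)
  thus "tr A = tr B" using split_traces(1)[OF A es] split_traces(1)[OF B fs] by simp
  have "sum_list (map (\<lambda>e. e^2) es) = sum_list (map (\<lambda>e. e^2) fs)" by (metis mm sum_mset_sum_list)
  thus "tr (A*A) = tr (B*B)" using split_traces(2)[OF A es] split_traces(2)[OF B fs] by simp
qed

lemma A_alpha_tr:
  assumes G: "is_graph n E"
  shows "tr (A_alpha \<alpha> n E) = \<alpha> * (\<Sum>i<n. real (degree n E i))"
proof -
  have "tr (A_alpha \<alpha> n E) = (\<Sum>i<n. \<alpha> * real (degree n E i))"
    unfolding tr_def using G unfolding is_graph_def by (simp add: A_alpha_entry)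
  thus ?thesis by (simp add: sum_distrib_left)
qed

lemma A_alpha_tr2:
  assumes G: "is_graph n E"
  shows "tr (A_alpha \<alpha> n E * A_alpha \<alpha> n E) =
    \<alpha>^2 * (\<Sum>i<n. (real (degree n E i))^2) + (1 - \<alpha>)^2 * (\<Sum>i<n. real (degree n E i))"
proof -
  let ?A = "A_alpha \<alpha> n E"
  have irr: "\<not> E i i" for i using G unfolding is_graph_def by auto
  have row: "(\<Sum>k<n. ?A$$(i,k) * ?A$$(k,i)) = \<alpha>^2 * (real (degree n E i))^2 + (1 - \<alpha>)^2 * real (degree n E i)"
    if i: "i < n" for i
  proof -
    have "(\<Sum>k<n. ?A$$(i,k) * ?A$$(k,i)) =
        (\<Sum>k<n. (if k = i then \<alpha>^2 * (real (degree n E i))^2 else 0)) + (1 - \<alpha>)^2 * (\<Sum>k<n. if E i k then 1 else 0)"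
    proof -
      have "\<And>k. k < n \<Longrightarrow> ?A$$(i,k) * ?A$$(k,i) =
         (if k = i then \<alpha>^2 * (real (degree n E i))^2 else 0) + (1 - \<alpha>)^2 * (if E i k then 1 else 0)"
        using i irr G unfolding is_graph_def by (auto simp: A_alpha_entry power2_eq_square)
      thus ?thesis by (simp add: sum.distrib sum_distrib_left)
    qed
    also have "(\<Sum>k<n. if E i k then (1::real) else 0) = real (degree n E i)"
      unfolding degree_def by (simp add: sum_ind lessThan_def)
    finally show ?thesis using i by simp
  qed
  have "tr (?A * ?A) = (\<Sum>i<n. \<Sum>k<n. ?A$$(i,k) * ?A$$(k,i))"
    unfolding tr_def by (simp add: scalar_prod_def lessThan_atLeast0)
  also have "\<dots> = (\<Sum>i<n. \<alpha>^2 * (real (degree n E i))^2 + (1 - \<alpha>)^2 * real (degree n E i))"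
    by (rule sum.cong, simp_all add: row)
  finally show ?thesis by (simp add: sum.distrib sum_distrib_left)
qed



lemma join_cospec:
  assumes G1: "is_graph n X1" and R1: "regular n X1 r" and G2: "is_graph n X2" and R2: "regular n X2 r"
    and n: "n \<ge> 1" and m: "m \<ge> 1"
    and cpJ: "char_poly (A_alpha \<alpha> (n+m) (join_complete n X1 m)) = char_poly (A_alpha \<alpha> (n+m) (join_complete n X2 m))"
  shows "char_poly (A_alpha \<alpha> n X1) = char_poly (A_alpha \<alpha> n X2)"
proof -
  let ?pJ = "char_poly (A_alpha \<alpha> (n+m) (join_complete n X2 m))"
  define D where "D = char_poly (A_alpha \<alpha> n X1) - char_poly (A_alpha \<alpha> n X2)"
  have pJ0: "?pJ \<noteq> 0"
  proof
    assume "?pJ = 0"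
    hence "coeff ?pJ (n+m) = 0" by simp
    thus False using degree_monic_char_poly[OF A_alpha_carrier[of \<alpha> "n+m" "join_complete n X2 m"]] by simp
  qed
  have key: "poly D (x - \<alpha> * real m) = 0" if x: "poly ?pJ x * (x - \<alpha> * real m - real r) \<noteq> 0" for x
  proof -
    have e1: "poly ?pJ x * (x - \<alpha> * real m - real r) = qq \<alpha> n m r x * poly (char_poly (A_alpha \<alpha> n X1)) (x - \<alpha> * real m)"
      using join_identity[OF G1 R1 n m, of \<alpha> x] cpJ by simp
    have e2: "poly ?pJ x * (x - \<alpha> * real m - real r) = qq \<alpha> n m r x * poly (char_poly (A_alpha \<alpha> n X2)) (x - \<alpha> * real m)"
      using join_identity[OF G2 R2 n m, of \<alpha> x] by simp
    have "qq \<alpha> n m r x \<noteq> 0" using x e2 by auto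
    thus ?thesis using e1 e2 unfolding D_def by (simp add: algebra_simps)
  qed
  show ?thesis
  proof (rule ccontr)
    assume ne: "char_poly (A_alpha \<alpha> n X1) \<noteq> char_poly (A_alpha \<alpha> n X2)"
    hence D0: "D \<noteq> 0" unfolding D_def by simp
    define Z where "Z = {x. poly ?pJ x = 0} \<union> {\<alpha> * real m + real r} \<union> (\<lambda>y. y + \<alpha> * real m) ` {y. poly D y = 0}"
    have "finite Z" unfolding Z_def using poly_roots_finite[OF pJ0] poly_roots_finite[OF D0] by simp
    then obtain x :: real where xZ: "x \<notin> Z" using ex_new_if_finite[OF infinite_UNIV_char_0] by blast
    hence "poly ?pJ x * (x - \<alpha> * real m - real r) \<noteq> 0" unfolding Z_def by auto
    hence "poly D (x - \<alpha> * real m) = 0" by (rule key)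
    hence "x \<in> Z" unfolding Z_def by (auto intro: image_eqI[of _ _ "x - \<alpha> * real m"])
    thus False using xZ by simp
  qed
qed

lemma join_is_graph: "is_graph n X \<Longrightarrow> is_graph (n+m) (join_complete n X m)"
  unfolding is_graph_def join_complete_def by auto



lemma dominating:
  assumes G: "is_graph h F" and v: "v < h" and d: "degree h F v = h - 1" and w: "w < h" "w \<noteq> v"
  shows "F v w"
proof -
  have sub: "{j. j < h \<and> F v j} \<subseteq> {..<h} - {v}" using G unfolding is_graph_def by auto
  have "card {j. j < h \<and> F v j} = card ({..<h} - {v})" using d v unfolding degree_def by simp
  hence "{j. j < h \<and> F v j} = {..<h} - {v}" using sub by (intro card_subset_eq) auto
  thus ?thesis using w by auto
qed

lemma join_degree_sums:
  assumes G: "is_graph n X" and R: "regular n X r"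
  shows "(\<Sum>i<n+m. real (degree (n+m) (join_complete n X m) i)) = real n * real (r+m) + real m * real (n+m-1)"
    and "(\<Sum>i<n+m. (real (degree (n+m) (join_complete n X m) i))^2) = real n * (real (r+m))^2 + real m * (real (n+m-1))^2"
proof -
  have split: "(\<Sum>i<n+m. f i) = (\<Sum>i<n. f i) + (\<Sum>i\<in>{n..<n+m}. f i)" for f :: "nat \<Rightarrow> real"
    by (simp add: lessThan_atLeast0 sum.atLeastLessThan_concat)
  have s1: "(\<Sum>i<n. f (degree (n+m) (join_complete n X m) i)) = real n * f (r+m)" for f :: "nat \<Rightarrow> real"
    using join_degree(1)[OF G R] by simp
  have s2: "(\<Sum>i\<in>{n..<n+m}. f (degree (n+m) (join_complete n X m) i)) = real m * f (n+m-1)" for f :: "nat \<Rightarrow> real"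
  proof -
    have "(\<Sum>i\<in>{n..<n+m}. f (degree (n+m) (join_complete n X m) i)) = (\<Sum>i\<in>{n..<n+m}. f (n+m-1))"
      by (rule sum.cong, use join_degree(2)[OF G R] in auto)
    thus ?thesis by simp
  qed
  show "(\<Sum>i<n+m. real (degree (n+m) (join_complete n X m) i)) = real n * real (r+m) + real m * real (n+m-1)"
    unfolding split using s1[of real] s2[of real] by simp
  show "(\<Sum>i<n+m. (real (degree (n+m) (join_complete n X m) i))^2) = real n * (real (r+m))^2 + real m * (real (n+m-1))^2"
    unfolding split using s1[of "\<lambda>d. (real d)^2"] s2[of "\<lambda>d. (real d)^2"] by simp
qed

theorem lemma3p5:
  fixes \<alpha> :: real and n r m h :: nat and E F :: "nat \<Rightarrow> nat \<Rightarrow> bool"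
  assumes "0 < \<alpha>" and "\<alpha> \<le> 1"
    and "is_graph n E" and "regular n E r" and "DAS \<alpha> n E"
    and "m \<ge> 1"
    and "is_graph h F"
    and "A_alpha_cospectral \<alpha> h F (n + m) (join_complete n E m)"
    and "card {v. v < h \<and> degree h F v = n + m - 1} \<ge> m"
  shows "graph_iso h F (n + m) (join_complete n E m)"
proof -
  note a0 = assms(1) and GE = assms(3) and RE = assms(4) and DAS = assms(5) and m = assms(6)
    and GF = assms(7) and cosp = assms(8) and card = assms(9)
  define J where "J = join_complete n E m"
  have h: "h = n + m" using cosp unfolding A_alpha_cospectral_def by simp
  have GJ: "is_graph (n+m) J" unfolding J_def by (rule join_is_graph[OF GE])
  have ordFJ: "Polynomial.order x (char_poly (A_alpha \<alpha> h F)) = Polynomial.order x (char_poly (A_alpha \<alpha> (n+m) J))" for x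
    using cosp unfolding A_alpha_cospectral_def eig_mult_def J_def by blast
  have sc: "char_poly (A_alpha \<alpha> h F) = char_poly (A_alpha \<alpha> (n+m) J)"
     "tr (A_alpha \<alpha> h F) = tr (A_alpha \<alpha> (n+m) J)"
     "tr (A_alpha \<alpha> h F * A_alpha \<alpha> h F) = tr (A_alpha \<alpha> (n+m) J * A_alpha \<alpha> (n+m) J)"
  proof -
    have GFh: "is_graph (n+m) F" using GF h by simp
    note r = split_cospec[OF A_alpha_carrier[of \<alpha> "n+m" F] A_alpha_sym[OF GFh]
       A_alpha_carrier[of \<alpha> "n+m" J] A_alpha_sym[OF GJ] ordFJ[unfolded h]]
    show "char_poly (A_alpha \<alpha> h F) = char_poly (A_alpha \<alpha> (n+m) J)" using r(1) h by simp
    show "tr (A_alpha \<alpha> h F) = tr (A_alpha \<alpha> (n+m) J)" using r(2) h by simp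
    show "tr (A_alpha \<alpha> h F * A_alpha \<alpha> h F) = tr (A_alpha \<alpha> (n+m) J * A_alpha \<alpha> (n+m) J)"
      using r(3) h by simp
  qed
  define d where "d v = real (degree h F v)" for v
  have sum1: "(\<Sum>v<h. d v) = real n * real (r+m) + real m * real (n+m-1)"
  proof -
    have "\<alpha> * (\<Sum>v<h. d v) = \<alpha> * (real n * real (r+m) + real m * real (n+m-1))"
      using sc(2) unfolding A_alpha_tr[OF GF] A_alpha_tr[OF GJ] d_def join_degree_sums[OF GE RE, where m=m, folded J_def]
      by simp
    thus ?thesis using a0 by simp
  qed
  have sum2: "(\<Sum>v<h. (d v)^2) = real n * (real (r+m))^2 + real m * (real (n+m-1))^2"
  proof -
    have "\<alpha>^2 * (\<Sum>v<h. (d v)^2) + (1 - \<alpha>)^2 * (\<Sum>v<h. d v) =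
       \<alpha>^2 * (real n * (real (r+m))^2 + real m * (real (n+m-1))^2) + (1 - \<alpha>)^2 * (real n * real (r+m) + real m * real (n+m-1))"
      using sc(3) unfolding A_alpha_tr2[OF GF] A_alpha_tr2[OF GJ] d_def join_degree_sums[OF GE RE, where m=m, folded J_def]
      by simp
    thus ?thesis using a0 sum1 by simp
  qed
  obtain S where S: "S \<subseteq> {v. v < h \<and> degree h F v = n + m - 1}" and cS: "card S = m"
    using obtain_subset_with_card_n[OF card] by blast
  have Sh: "S \<subseteq> {..<h}" using S by auto
  have dS: "v \<in> S \<Longrightarrow> d v = real (n+m-1)" for v using S unfolding d_def by auto
  define T where "T = {..<h} - S"
  have fT: "finite T" and fS: "finite S" using Sh unfolding T_def by (auto intro: finite_subset)
  have cT: "card T = n" unfolding T_def using Sh cS h by (simp add: card_Diff_subset finite_subset)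
  have hTS: "{..<h} = T \<union> S" "T \<inter> S = {}" unfolding T_def using Sh by auto
  have sumT: "(\<Sum>v\<in>T. f v) = (\<Sum>v<h. f v) - (\<Sum>v\<in>S. f v)" for f :: "nat \<Rightarrow> real"
    unfolding hTS(1) by (simp add: sum.union_disjoint[OF fT fS hTS(2)])
  have sT1: "(\<Sum>v\<in>T. d v) = real n * real (r+m)"
    unfolding sumT sum1 using dS cS by simp
  have sT2: "(\<Sum>v\<in>T. (d v)^2) = real n * (real (r+m))^2"
    unfolding sumT sum2 using dS cS by simp
  have dT: "d v = real (r+m)" if v: "v \<in> T" for v
  proof -
    have "(\<Sum>v\<in>T. (d v - real (r+m))^2) = (\<Sum>v\<in>T. (d v)^2) - 2 * real (r+m) * (\<Sum>v\<in>T. d v) + real (card T) * (real (r+m))^2"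
      by (simp add: power2_diff sum.distrib sum_subtractf sum_distrib_left sum_distrib_right algebra_simps)
    also have "\<dots> = 0" unfolding sT1 sT2 cT by (simp add: power2_eq_square)
    finally have "(\<Sum>v\<in>T. (d v - real (r+m))^2) = 0" .
    hence "(d v - real (r+m))^2 = 0" using sum_nonneg_eq_0_iff[OF fT, of "\<lambda>v. (d v - real (r+m))^2"] v by simp
    thus ?thesis by simp
  qed
  have dom: "F v w" if "v \<in> S" "w < h" "w \<noteq> v" for v w
    using dominating[OF GF _ _ that(2,3)] that(1) S h by auto
  obtain bT where bT: "bij_betw bT {0..<n} T" using ex_bij_betw_nat_finite[OF fT] cT by auto
  obtain bS where bS: "bij_betw bS {0..<m} S" using ex_bij_betw_nat_finite[OF fS] cS by auto
  define g where "g i = (if i < n then bT i else bS (i - n))" for i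
  have g1: "bij_betw g {..<n} T"
    using bT unfolding lessThan_atLeast0[symmetric] by (rule bij_betw_cong[THEN iffD1, rotated]) (simp add: g_def)
  have sh: "bij_betw (\<lambda>i. i - n) {n..<n+m} {0..<m}"
    by (rule bij_betwI[where g="\<lambda>i. i + n"]) auto
  have g2: "bij_betw g {n..<n+m} S"
  proof -
    have "bij_betw (bS \<circ> (\<lambda>i. i - n)) {n..<n+m} S" by (rule bij_betw_trans[OF sh bS])
    thus ?thesis by (rule bij_betw_cong[THEN iffD1, rotated]) (simp add: g_def)
  qed
  have gb: "bij_betw g {..<n+m} {..<h}"
  proof -
    have "bij_betw g ({..<n} \<union> {n..<n+m}) (T \<union> S)" by (rule bij_betw_combine[OF g1 g2 hTS(2)])
    moreover have "{..<n} \<union> {n..<n+m} = {..<n+m}" by auto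
    ultimately show ?thesis using hTS(1) by simp
  qed
  have gT: "i < n \<Longrightarrow> g i \<in> T" for i using g1 unfolding bij_betw_def by auto
  have gS: "n \<le> i \<Longrightarrow> i < n + m \<Longrightarrow> g i \<in> S" for i using g2 unfolding bij_betw_def by auto
  have gh: "i < n + m \<Longrightarrow> g i < h" for i using gb unfolding bij_betw_def by auto
  have ginj: "i < n + m \<Longrightarrow> j < n + m \<Longrightarrow> g i = g j \<longleftrightarrow> i = j" for i j
    using gb unfolding bij_betw_def inj_on_def by auto
  have Firr: "\<not> F v v" for v using GF unfolding is_graph_def by auto
  have Fsym: "F v w \<Longrightarrow> F w v" for v w using GF unfolding is_graph_def by auto
  have TS: "v \<in> T \<Longrightarrow> v \<notin> S" "v \<in> T \<Longrightarrow> v < h" for v unfolding T_def by auto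
  define E' where "E' i j = (i < n \<and> j < n \<and> F (g i) (g j))" for i j
  define F' where "F' i j = (i < n + m \<and> j < n + m \<and> F (g i) (g j))" for i j
  have F'J: "F' i j = join_complete n E' m i j" for i j
  proof (cases "i < n + m \<and> j < n + m")
    case True
    hence i: "i < n + m" and j: "j < n + m" by auto
    show ?thesis
    proof (cases "i = j")
      case True thus ?thesis unfolding F'_def join_complete_def using Firr by auto
    next
      case ij: False
      hence gij: "g i \<noteq> g j" using ginj i j by simp
      show ?thesis
      proof (cases "i < n \<and> j < n")
        case True thus ?thesis unfolding F'_def join_complete_def E'_def using ij by auto
      next
        case False
        have "F (g i) (g j)"
        proof (cases "n \<le> i")
          case True thus ?thesis using dom[OF gS[OF True i] gh[OF j]] gij by auto
        next
          case False
          hence "n \<le> j" using \<open>\<not> (i < n \<and> j < n)\<close> by auto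
          thus ?thesis using dom[OF gS[OF _ j] gh[OF i]] gij Fsym by auto
        qed
        thus ?thesis unfolding F'_def join_complete_def using ij False i j by auto
      qed
    qed
  next
    case False thus ?thesis unfolding F'_def join_complete_def by auto
  qed
  have cpF': "char_poly (A_alpha \<alpha> (n+m) F') = char_poly (A_alpha \<alpha> (n+m) F)"
    by (rule A_alpha_permute[OF gb[unfolded h]]) (simp add: F'_def)
  have F'eq: "F' = join_complete n E' m" using F'J by (intro ext) simp
  have cpJ': "char_poly (A_alpha \<alpha> (n+m) (join_complete n E' m)) = char_poly (A_alpha \<alpha> (n+m) (join_complete n E m))"
    using cpF' sc(1) h unfolding F'eq J_def by simp
  have GE': "is_graph n E'" unfolding is_graph_def E'_def using Firr Fsym by auto
  have RE': "regular n E' r" unfolding regular_def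
  proof (intro allI impI)
    fix i assume i: "i < n"
    define v where "v = g i"
    have vT: "v \<in> T" using gT[OF i] v_def by simp
    have "{w. w < h \<and> F v w} = g ` {j. j < n \<and> F v (g j)} \<union> S"
    proof
      show "{w. w < h \<and> F v w} \<subseteq> g ` {j. j < n \<and> F v (g j)} \<union> S"
      proof
        fix w assume w: "w \<in> {w. w < h \<and> F v w}"
        show "w \<in> g ` {j. j < n \<and> F v (g j)} \<union> S"
        proof (cases "w \<in> S")
          case False
          hence "w \<in> T" using w hTS(1) by auto
          hence "w \<in> g ` {..<n}" using g1 unfolding bij_betw_def by simp
          then obtain j where "j < n" "w = g j" by auto
          thus ?thesis using w by auto
        qed simp
      qed
      show "g ` {j. j < n \<and> F v (g j)} \<union> S \<subseteq> {w. w < h \<and> F v w}"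
      proof
        fix w assume w: "w \<in> g ` {j. j < n \<and> F v (g j)} \<union> S"
        show "w \<in> {w. w < h \<and> F v w}"
        proof (cases "w \<in> S")
          case True
          have "w \<noteq> v" using True TS(1)[OF vT] by auto
          hence "F w v" using dom[OF True TS(2)[OF vT]] by auto
          thus ?thesis using Fsym True Sh by auto
        next
          case False thus ?thesis using w gh by auto
        qed
      qed
    qed
    moreover have "card (g ` {j. j < n \<and> F v (g j)} \<union> S) = card {j. j < n \<and> F v (g j)} + m"
    proof -
      have inj: "inj_on g {j. j < n \<and> F v (g j)}"
        using g1 unfolding bij_betw_def by (auto intro: inj_on_subset)
      have "g ` {j. j < n \<and> F v (g j)} \<inter> S = {}" using gT TS by auto
      hence "card (g ` {j. j < n \<and> F v (g j)} \<union> S) = card (g ` {j. j < n \<and> F v (g j)}) + card S"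
        by (intro card_Un_disjoint) (use fS in auto)
      thus ?thesis using card_image[OF inj] cS by simp
    qed
    moreover have "degree h F v = r + m" using dT[OF vT] unfolding d_def by simp
    ultimately have "card {j. j < n \<and> F v (g j)} = r" unfolding degree_def by simp
    moreover have "{j. j < n \<and> E' i j} = {j. j < n \<and> F v (g j)}" unfolding E'_def v_def using i by auto
    ultimately show "degree n E' i = r" unfolding degree_def by simp
  qed
  have cpE: "char_poly (A_alpha \<alpha> n E') = char_poly (A_alpha \<alpha> n E)"
  proof (cases "n = 0")
    case True
    have "A_alpha \<alpha> n E' = A_alpha \<alpha> n E" by (rule eq_matI) (use True in auto)
    thus ?thesis by simp
  next
    case False
    thus ?thesis using join_cospec[OF GE' RE' GE RE _ m cpJ'] by simp
  qed
  have "A_alpha_cospectral \<alpha> n E' n E" unfolding A_alpha_cospectral_def eig_mult_def cpE by simp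
  with DAS GE' have "graph_iso n E' n E" unfolding DAS_def by blast
  then obtain f where fb: "bij_betw f {..<n} {..<n}" and fE: "\<And>i j. i < n \<Longrightarrow> j < n \<Longrightarrow> E' i j \<longleftrightarrow> E (f i) (f j)"
    unfolding graph_iso_def by blast
  define f' where "f' i = (if i < n then f i else i)" for i
  have f'b: "bij_betw f' {..<n+m} {..<n+m}"
  proof -
    have b1: "bij_betw f' {..<n} {..<n}" using fb by (rule bij_betw_cong[THEN iffD1, rotated]) (simp add: f'_def)
    have b2: "bij_betw f' {n..<n+m} {n..<n+m}" by (rule bij_betw_cong[THEN iffD1, rotated, OF bij_betw_id]) (simp add: f'_def)
    have "bij_betw f' ({..<n} \<union> {n..<n+m}) ({..<n} \<union> {n..<n+m})" by (rule bij_betw_combine[OF b1 b2]) auto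
    moreover have "{..<n} \<union> {n..<n+m} = {..<n+m}" by auto
    ultimately show ?thesis by simp
  qed
  have f'n: "i < n + m \<Longrightarrow> f' i < n \<longleftrightarrow> i < n" for i using fb unfolding f'_def bij_betw_def by auto
  have f'inj: "i < n + m \<Longrightarrow> j < n + m \<Longrightarrow> f' i = f' j \<longleftrightarrow> i = j" for i j
    using f'b unfolding bij_betw_def inj_on_def by auto
  have f'N: "i < n + m \<Longrightarrow> f' i < n + m" for i using f'b unfolding bij_betw_def by auto
  define gi where "gi = inv_into {..<n+m} g"
  have gib: "bij_betw gi {..<h} {..<n+m}" unfolding gi_def by (rule bij_betw_inv_into[OF gb])
  have ggi: "u < h \<Longrightarrow> g (gi u) = u" for u unfolding gi_def using gb by (simp add: bij_betw_inv_into_right)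
  have giN: "u < h \<Longrightarrow> gi u < n + m" for u using gib unfolding bij_betw_def by auto
  show ?thesis unfolding graph_iso_def
  proof (intro exI conjI allI impI)
    show "bij_betw (f' \<circ> gi) {..<h} {..<n+m}" by (rule bij_betw_trans[OF gib f'b])
    fix u v assume u: "u < h" and v: "v < h"
    have "F u v = F' (gi u) (gi v)" unfolding F'_def using ggi[OF u] ggi[OF v] giN[OF u] giN[OF v] by simp
    also have "\<dots> = join_complete n E' m (gi u) (gi v)" by (rule F'J)
    also have "\<dots> = join_complete n E m (f' (gi u)) (f' (gi v))"
      using giN[OF u] giN[OF v] f'n[OF giN[OF u]] f'n[OF giN[OF v]] f'inj[OF giN[OF u] giN[OF v]]
        f'N[OF giN[OF u]] f'N[OF giN[OF v]] fE[of "gi u" "gi v"]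
      unfolding join_complete_def by (auto simp: f'_def)
    finally show "F u v = join_complete n E m ((f' \<circ> gi) u) ((f' \<circ> gi) v)" by simp
  qed
qed

end
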